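(* Let $\Delta>1$, let $\varepsilon=1/100$ and $\hat p=\Delta^{-3/4-5\varepsilon}$, and let $\delta,\nu\ge 0$. Let $G$ be a graph, $v$ a vertex of $G$, $L$ a finite set, and $p:V(G)\times L\to[0,\infty)$ a function such that for every $\gamma\in L$ either $p(v,\gamma)=0$ or $p(v,\gamma)\ge 1/\Delta$. Define $p_a(v,\gamma)=p(v,\gamma)$ if $p(v,\gamma)\le\hat p$ and $p_a(v,\gamma)=0$ otherwise, and $p_c(v,\gamma)=p_a(v,\gamma)$ if $\sum_{u\sim v}p(u,\gamma)\le 100\ln\Delta$ and $p_c(v,\gamma)=0$ otherwise. Suppose $$h(v,p):=-\sum_{\gamma\in L:\,p(v,\gamma)>0}p(v,\gamma)\ln p(v,\gamma)\ \ge\ (1-\delta)\ln\Delta\quad\text{and}\quad \sum_{\gamma\in L}p(v,\gamma)\in[1-\nu,1+\nu].$$ Then $\sum_{\gamma}p_a(v,\gamma)\ge 1-6(\delta+\nu)$. If in addition $\xi(v,p):=\sum_{u\sim v}\sum_{\gamma\in L}p(u,\gamma)p(v,\gamma)\le 2K$ for some $0<K\le\ln\Delta$, then $\sum_\gamma p_c(v,\gamma)\ge 1-6(\delta+\nu)-2\varepsilon$.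
   Context: $u\sim v$ means $u$ is adjacent to $v$ in $G$; $\ln$ is the natural logarithm. *)

theory Defs
  imports Complex_Main
begin

definition simple_graph :: "'a set \<Rightarrow> ('a \<Rightarrow> 'a \<Rightarrow> bool) \<Rightarrow> bool" where
  "simple_graph V E \<longleftrightarrow> finite V \<and> (\<forall>u w. E u w \<longrightarrow> u \<in> V \<and> w \<in> V)
      \<and> (\<forall>u w. E u w \<longrightarrow> E w u) \<and> (\<forall>u. \<not> E u u)"

definition nbrs :: "'a set \<Rightarrow> ('a \<Rightarrow> 'a \<Rightarrow> bool) \<Rightarrow> 'a \<Rightarrow> 'a set" where
  "nbrs V E v = {u \<in> V. E u v}"

definition eps :: real where "eps = 1/100"

definition phat :: "real \<Rightarrow> real" where
  "phat \<Delta> = \<Delta> powr (-3/4 - 5 * eps)"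

definition p_a :: "real \<Rightarrow> ('a \<Rightarrow> 'c \<Rightarrow> real) \<Rightarrow> 'a \<Rightarrow> 'c \<Rightarrow> real" where
  "p_a \<Delta> p v \<gamma> = (if p v \<gamma> \<le> phat \<Delta> then p v \<gamma> else 0)"

definition p_c :: "'a set \<Rightarrow> ('a \<Rightarrow> 'a \<Rightarrow> bool) \<Rightarrow> real \<Rightarrow> ('a \<Rightarrow> 'c \<Rightarrow> real) \<Rightarrow> 'a \<Rightarrow> 'c \<Rightarrow> real" where
  "p_c V E \<Delta> p v \<gamma> =
     (if (\<Sum>u\<in>nbrs V E v. p u \<gamma>) \<le> 100 * ln \<Delta> then p_a \<Delta> p v \<gamma> else 0)"

definition entropy_h :: "'c set \<Rightarrow> ('a \<Rightarrow> 'c \<Rightarrow> real) \<Rightarrow> 'a \<Rightarrow> real" where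
  "entropy_h L p v = - (\<Sum>\<gamma>\<in>{\<gamma>\<in>L. p v \<gamma> > 0}. p v \<gamma> * ln (p v \<gamma>))"

definition xi :: "'a set \<Rightarrow> ('a \<Rightarrow> 'a \<Rightarrow> bool) \<Rightarrow> 'c set \<Rightarrow> ('a \<Rightarrow> 'c \<Rightarrow> real) \<Rightarrow> 'a \<Rightarrow> real" where
  "xi V E L p v = (\<Sum>u\<in>nbrs V E v. \<Sum>\<gamma>\<in>L. p u \<gamma> * p v \<gamma>)"

end

theory Submission
  imports Defs
begin

theorem mainTheorem8:
  fixes V :: "'a set" and E :: "'a \<Rightarrow> 'a \<Rightarrow> bool" and v :: 'a
    and L :: "'c set" and p :: "'a \<Rightarrow> 'c \<Rightarrow> real"
    and \<Delta> \<delta> \<nu> :: real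
  assumes "\<Delta> > 1" and "\<delta> \<ge> 0" and "\<nu> \<ge> 0"
    and "simple_graph V E" and "v \<in> V"
    and "finite L"
    and "\<forall>u\<in>V. \<forall>\<gamma>\<in>L. p u \<gamma> \<ge> 0"
    and "\<forall>\<gamma>\<in>L. p v \<gamma> = 0 \<or> p v \<gamma> \<ge> 1 / \<Delta>"
    and "entropy_h L p v \<ge> (1 - \<delta>) * ln \<Delta>"
    and "(\<Sum>\<gamma>\<in>L. p v \<gamma>) \<ge> 1 - \<nu>" and "(\<Sum>\<gamma>\<in>L. p v \<gamma>) \<le> 1 + \<nu>"
  shows "(\<Sum>\<gamma>\<in>L. p_a \<Delta> p v \<gamma>) \<ge> 1 - 6 * (\<delta> + \<nu>)
    \<and> (\<forall>K. 0 < K \<and> K \<le> ln \<Delta> \<and> xi V E L p v \<le> 2 * K \<longrightarrow>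
          (\<Sum>\<gamma>\<in>L. p_c V E \<Delta> p v \<gamma>) \<ge> 1 - 6 * (\<delta> + \<nu>) - 2 * eps)"
proof -
  note D = assms(1)
  have lnpos: "ln \<Delta> > 0" using D by simp
  have nn: "\<And>\<gamma>. \<gamma> \<in> L \<Longrightarrow> p v \<gamma> \<ge> 0" using assms(5,7) by blast
  have lnph: "ln (phat \<Delta>) = -(4/5) * ln \<Delta>"
    unfolding phat_def eps_def using D by (simp add: ln_powr)
  define q where "q \<gamma> = (if p v \<gamma> \<le> phat \<Delta> then 0 else p v \<gamma>)" for \<gamma>
  have split: "\<And>\<gamma>. p v \<gamma> = p_a \<Delta> p v \<gamma> + q \<gamma>" unfolding q_def p_a_def by simp
  define f where "f \<gamma> = ln \<Delta> * p_a \<Delta> p v \<gamma> + (4/5) * ln \<Delta> * q \<gamma>" for \<gamma>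
  have fb: "- (p v \<gamma> * ln (p v \<gamma>)) \<le> f \<gamma>" if g: "\<gamma> \<in> {\<gamma>\<in>L. p v \<gamma> > 0}" for \<gamma>
  proof -
    from g have gL: "\<gamma> \<in> L" and pp: "p v \<gamma> > 0" by auto
    show ?thesis
    proof (cases "p v \<gamma> \<le> phat \<Delta>")
      case True
      have "p v \<gamma> \<ge> 1 / \<Delta>" using assms(8) gL pp by auto
      hence "ln (p v \<gamma>) \<ge> ln (1/\<Delta>)" using D pp by (subst ln_le_cancel_iff) auto
      hence "ln (p v \<gamma>) \<ge> - ln \<Delta>" using D by (simp add: ln_div)
      hence "p v \<gamma> * (- ln \<Delta>) \<le> p v \<gamma> * ln (p v \<gamma>)" using pp
        by (intro mult_left_mono) auto
      hence "- (p v \<gamma> * ln (p v \<gamma>)) \<le> p v \<gamma> * ln \<Delta>" by simp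
      thus ?thesis using True unfolding f_def q_def p_a_def by (simp add: mult.commute mult.left_commute)
    next
      case False
      have php: "phat \<Delta> > 0" unfolding phat_def using D by simp
      have "ln (p v \<gamma>) > ln (phat \<Delta>)" using False php by simp
      hence "ln (p v \<gamma>) > -(4/5) * ln \<Delta>" using lnph by simp
      hence "p v \<gamma> * (-(4/5) * ln \<Delta>) \<le> p v \<gamma> * ln (p v \<gamma>)" using pp
        by (intro mult_left_mono) auto
      hence "- (p v \<gamma> * ln (p v \<gamma>)) \<le> p v \<gamma> * ((4/5) * ln \<Delta>)" by simp
      thus ?thesis using False unfolding f_def q_def p_a_def by (simp add: mult.commute mult.left_commute)
    qed
  qed
  have f0: "f \<gamma> = 0" if "\<gamma> \<in> L" "\<not> p v \<gamma> > 0" for \<gamma>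
  proof -
    have "p v \<gamma> = 0" using that nn by force
    thus ?thesis unfolding f_def q_def p_a_def using lnpos by simp
  qed
  have "entropy_h L p v \<le> (\<Sum>\<gamma>\<in>{\<gamma>\<in>L. p v \<gamma> > 0}. f \<gamma>)"
    unfolding entropy_h_def sum_negf[symmetric] by (rule sum_mono) (rule fb)
  also have "\<dots> = (\<Sum>\<gamma>\<in>L. f \<gamma>)"
    by (rule sum.mono_neutral_left) (use assms(6) f0 in auto)
  also have "\<dots> = ln \<Delta> * ((\<Sum>\<gamma>\<in>L. p_a \<Delta> p v \<gamma>) + (4/5) * (\<Sum>\<gamma>\<in>L. q \<gamma>))"
    unfolding f_def by (simp add: sum.distrib sum_distrib_left sum_distrib_right algebra_simps)
  finally have "(1 - \<delta>) * ln \<Delta> \<le> ln \<Delta> * ((\<Sum>\<gamma>\<in>L. p_a \<Delta> p v \<gamma>) + (4/5) * (\<Sum>\<gamma>\<in>L. q \<gamma>))"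
    using assms(9) by linarith
  hence H: "1 - \<delta> \<le> (\<Sum>\<gamma>\<in>L. p_a \<Delta> p v \<gamma>) + (4/5) * (\<Sum>\<gamma>\<in>L. q \<gamma>)"
    using lnpos by (simp add: mult.commute)
  have T: "(\<Sum>\<gamma>\<in>L. p v \<gamma>) = (\<Sum>\<gamma>\<in>L. p_a \<Delta> p v \<gamma>) + (\<Sum>\<gamma>\<in>L. q \<gamma>)"
    by (simp add: split sum.distrib)
  have P1: "(\<Sum>\<gamma>\<in>L. p_a \<Delta> p v \<gamma>) \<ge> 1 - 6 * (\<delta> + \<nu>)"
    using H T assms(2,3,10,11) by (simp add: field_simps)
  show ?thesis
  proof (intro conjI allI impI)
    show "(\<Sum>\<gamma>\<in>L. p_a \<Delta> p v \<gamma>) \<ge> 1 - 6 * (\<delta> + \<nu>)" by (rule P1)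
    fix K assume K: "0 < K \<and> K \<le> ln \<Delta> \<and> xi V E L p v \<le> 2 * K"
    define N where "N \<gamma> = (\<Sum>u\<in>nbrs V E v. p u \<gamma>)" for \<gamma>
    have Nnn: "N \<gamma> \<ge> 0" if "\<gamma> \<in> L" for \<gamma>
      unfolding N_def nbrs_def using assms(7) that by (intro sum_nonneg) auto
    define r where "r \<gamma> = (if N \<gamma> \<le> 100 * ln \<Delta> then 0 else p_a \<Delta> p v \<gamma>)" for \<gamma>
    have sc: "p_a \<Delta> p v \<gamma> = p_c V E \<Delta> p v \<gamma> + r \<gamma>" for \<gamma>
      unfolding r_def p_c_def N_def by simp
    have rb: "r \<gamma> \<le> p v \<gamma> * N \<gamma> / (100 * ln \<Delta>)" if gL: "\<gamma> \<in> L" for \<gamma>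
    proof (cases "N \<gamma> \<le> 100 * ln \<Delta>")
      case True
      thus ?thesis unfolding r_def using nn[OF gL] Nnn[OF gL] lnpos by simp
    next
      case False
      have "p_a \<Delta> p v \<gamma> \<le> p v \<gamma>" unfolding p_a_def using nn[OF gL] by simp
      also have "p v \<gamma> \<le> p v \<gamma> * N \<gamma> / (100 * ln \<Delta>)"
        using False nn[OF gL] lnpos by (simp add: le_divide_eq mult_left_mono)
      finally show ?thesis unfolding r_def using False by simp
    qed
    have "(\<Sum>\<gamma>\<in>L. r \<gamma>) \<le> (\<Sum>\<gamma>\<in>L. p v \<gamma> * N \<gamma> / (100 * ln \<Delta>))"
      by (rule sum_mono) (rule rb)
    also have "\<dots> = (\<Sum>\<gamma>\<in>L. p v \<gamma> * N \<gamma>) / (100 * ln \<Delta>)"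
      by (simp add: sum_divide_distrib)
    also have "(\<Sum>\<gamma>\<in>L. p v \<gamma> * N \<gamma>) = xi V E L p v"
      unfolding xi_def N_def sum_distrib_left
      by (subst sum.swap) (simp add: mult.commute)
    finally have "(\<Sum>\<gamma>\<in>L. r \<gamma>) \<le> xi V E L p v / (100 * ln \<Delta>)" .
    also have "\<dots> \<le> 2 * K / (100 * ln \<Delta>)"
      using K lnpos by (intro divide_right_mono) auto
    also have "\<dots> \<le> 2 * ln \<Delta> / (100 * ln \<Delta>)"
      using K lnpos by (intro divide_right_mono) auto
    also have "\<dots> = 2 * eps" using lnpos unfolding eps_def by simp
    finally have R: "(\<Sum>\<gamma>\<in>L. r \<gamma>) \<le> 2 * eps" .
    have "(\<Sum>\<gamma>\<in>L. p_a \<Delta> p v \<gamma>) = (\<Sum>\<gamma>\<in>L. p_c V E \<Delta> p v \<gamma>) + (\<Sum>\<gamma>\<in>L. r \<gamma>)"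
      by (simp add: sc sum.distrib)
    thus "(\<Sum>\<gamma>\<in>L. p_c V E \<Delta> p v \<gamma>) \<ge> 1 - 6 * (\<delta> + \<nu>) - 2 * eps"
      using P1 R by linarith
  qed
qed

end
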